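(* Let $K$ be an algebraically closed field, let $Q$ be the quiver with vertex set $\omega$ and arrows $a_n:n+1\to n$ ($n\in\omega$), and let $M_{\omega_1}$ be the $KQ$-module defined in the context. Then $\mathrm{Ext}^1_{KQ}\big(M_{\omega_1},\bigoplus_{\omega_1}KQ\big)\neq0$, where $\bigoplus_{\omega_1}KQ$ is the direct sum of $\omega_1$ copies of $KQ$.
   Context: Paths in a quiver are composable sequences of arrows written left to right, with trivial paths $e_v$; the path algebra $KQ$ has basis all paths, product = concatenation when the target of the first equals the source of the second, else $0$. Modules are right modules. $\omega_1$ is the first uncountable ordinal, $\mathrm{Lim}$ the class of nonzero limit ordinals. Fix a ladder system: for each $\alpha\in\omega_1\cap\mathrm{Lim}$ a set $C_\alpha=\{\zeta^\alpha_n:n\in\omega\}$, strictly increasingly enumerated and cofinal in $\alpha$, such that each $\zeta^\alpha_n$ equals $\delta+n+1$ for some $\delta\in\alpha\cap(\{0\}\cup\mathrm{Lim})$. For $\gamma\in\omega_1\setminus(\{0\}\cup\mathrm{Lim})$ let $n_\gamma\in\omega$ be the unique integer with $\gamma=\delta+n_\gamma+1$ for some $\delta\in\{0\}\cup\mathrm{Lim}$. For $\xi<\omega_1$ let $F^\xi=KQ$ if $\xi\notin\mathrm{Lim}$ and $F^\xi=\bigoplus_{n\in\omega}KQ$ if $\xi\in\mathrm{Lim}$; let $F=\bigoplus_{\xi<\omega_1}F^\xi$ (finite-support functions, coordinatewise operations). For $\gamma\notin\mathrm{Lim}$ and a vertex $m$, $e^\gamma_m\in F$ has support $\{\gamma\}$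 and value $e_m$ there; for $\alpha\in\mathrm{Lim}$ and vertex $m$, $e^\alpha_m\in F$ has support $\{\alpha\}$ and value at $\alpha$ the element of $\bigoplus_{n}KQ$ with support $\{0\}$ and value $e_m$. Let $G_\alpha$ be the $KQ$-submodule of $F$ generated by $\{e^{\zeta^\alpha_n}_n-e^\alpha_n+e^\alpha_{n+1}a_n:n\in\omega\}$, let $I=\sum_{\alpha\in\omega_1\cap\mathrm{Lim}}G_\alpha$, and let $M_{\omega_1}$ be the $KQ$-submodule of $F/I$ generated by $\{e^\gamma_{n_\gamma}+I:\gamma\in\omega_1\setminus(\{0\}\cup\mathrm{Lim})\}\cup\{e^\alpha_n+I:\alpha\in\omega_1\cap\mathrm{Lim},n\in\omega\}$. *)

theory Defs
  imports Main "HOL-Library.Countable_Set" "HOL-Computational_Algebra.Polynomial"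
begin

text \<open>A path of Q is determined by its source s and target t with t <= s: it is the
  trivial path e_s if s = t and the composite a_(s-1) ... a_t otherwise. We encode the
  path by the pair (s,t). Elements of KQ are finitely supported K-valued functions on
  paths (zero on pairs (s,t) with s < t). Product of paths (s,t)(t',u) is (s,u) if t = t'
  and 0 otherwise.\<close>

type_synonym 'k kqel = "nat \<times> nat \<Rightarrow> 'k"

definition kq :: "'k::comm_ring_1 kqel \<Rightarrow> bool" where
  "kq x \<longleftrightarrow> finite {p. x p \<noteq> 0} \<and> (\<forall>s t. s < t \<longrightarrow> x (s,t) = 0)"

definition kq_mult :: "'k::comm_ring_1 kqel \<Rightarrow> 'k kqel \<Rightarrow> 'k kqel" where
  "kq_mult x y = (\<lambda>(s,u). \<Sum>t\<in>{u..s}. x (s,t) * y (t,u))"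

definition kq_e :: "nat \<Rightarrow> 'k::comm_ring_1 kqel" where
  "kq_e v = (\<lambda>p. if p = (v,v) then 1 else 0)"

definition kq_a :: "nat \<Rightarrow> 'k::comm_ring_1 kqel" where
  "kq_a n = (\<lambda>p. if p = (Suc n, n) then 1 else 0)"

definition kq_idem :: "nat set \<Rightarrow> 'k::comm_ring_1 kqel" where
  "kq_idem V = (\<lambda>p. if fst p = snd p \<and> fst p \<in> V then 1 else 0)"

record ('a,'k) kqmod =
  mcar :: "'a set"
  madd :: "'a \<Rightarrow> 'a \<Rightarrow> 'a"
  mzero :: "'a"
  mact :: "'a \<Rightarrow> 'k kqel \<Rightarrow> 'a"

text \<open>(Unitary) right KQ-module: abelian group with a right KQ-action, M KQ = M.\<close>
definition is_kqmod :: "('a,'k::comm_ring_1) kqmod \<Rightarrow> bool" where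
  "is_kqmod M \<longleftrightarrow>
     mzero M \<in> mcar M \<and>
     (\<forall>x\<in>mcar M. \<forall>y\<in>mcar M. madd M x y \<in> mcar M) \<and>
     (\<forall>x\<in>mcar M. \<forall>y\<in>mcar M. \<forall>z\<in>mcar M. madd M (madd M x y) z = madd M x (madd M y z)) \<and>
     (\<forall>x\<in>mcar M. \<forall>y\<in>mcar M. madd M x y = madd M y x) \<and>
     (\<forall>x\<in>mcar M. madd M (mzero M) x = x) \<and>
     (\<forall>x\<in>mcar M. \<exists>y\<in>mcar M. madd M x y = mzero M) \<and>
     (\<forall>x\<in>mcar M. \<forall>r. kq r \<longrightarrow> mact M x r \<in> mcar M) \<and>
     (\<forall>x\<in>mcar M. \<forall>y\<in>mcar M. \<forall>r. kq r \<longrightarrow>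
        mact M (madd M x y) r = madd M (mact M x r) (mact M y r)) \<and>
     (\<forall>x\<in>mcar M. \<forall>r s. kq r \<longrightarrow> kq s \<longrightarrow>
        mact M x (\<lambda>p. r p + s p) = madd M (mact M x r) (mact M x s)) \<and>
     (\<forall>x\<in>mcar M. \<forall>r s. kq r \<longrightarrow> kq s \<longrightarrow>
        mact M (mact M x r) s = mact M x (kq_mult r s)) \<and>
     (\<forall>x\<in>mcar M. \<exists>V. finite V \<and> mact M x (kq_idem V) = x)"

definition kq_hom :: "('a,'k::comm_ring_1) kqmod \<Rightarrow> ('b,'k) kqmod \<Rightarrow> ('a \<Rightarrow> 'b) \<Rightarrow> bool" where
  "kq_hom M M' f \<longleftrightarrow>
     f ` mcar M \<subseteq> mcar M' \<and>
     (\<forall>x\<in>mcar M. \<forall>y\<in>mcar M. f (madd M x y) = madd M' (f x) (f y)) \<and>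
     (\<forall>x\<in>mcar M. \<forall>r. kq r \<longrightarrow> f (mact M x r) = mact M' (f x) r)"

text \<open>Ext^1(M,N) is nonzero iff there is a non-split short exact sequence
  0 -> N -> E -> M -> 0. Every such E is isomorphic to one whose underlying set is a
  subset of N x M (via a set-theoretic section), so E is taken on the type 'b x 'a.\<close>
definition Ext1_nonzero :: "('a,'k::comm_ring_1) kqmod \<Rightarrow> ('b,'k) kqmod \<Rightarrow> bool" where
  "Ext1_nonzero M N \<longleftrightarrow>
     (\<exists>(E::('b \<times> 'a,'k) kqmod) i p.
        is_kqmod E \<and> kq_hom N E i \<and> inj_on i (mcar N) \<and>
        kq_hom E M p \<and> p ` mcar E = mcar M \<and>
        i ` mcar N = {x\<in>mcar E. p x = mzero M} \<and>
        \<not> (\<exists>s. kq_hom M E s \<and> (\<forall>m\<in>mcar M. p (s m) = m)))"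

inductive_set mspan :: "('a,'k::comm_ring_1) kqmod \<Rightarrow> 'a set \<Rightarrow> 'a set"
  for M :: "('a,'k) kqmod" and S :: "'a set" where
  gen: "s \<in> S \<Longrightarrow> s \<in> mspan M S"
| zero: "mzero M \<in> mspan M S"
| add: "x \<in> mspan M S \<Longrightarrow> y \<in> mspan M S \<Longrightarrow> madd M x y \<in> mspan M S"
| neg: "x \<in> mspan M S \<Longrightarrow> y \<in> mcar M \<Longrightarrow> madd M x y = mzero M \<Longrightarrow> y \<in> mspan M S"
| act: "x \<in> mspan M S \<Longrightarrow> kq r \<Longrightarrow> mact M x r \<in> mspan M S"

definition sub_mod :: "('a,'k::comm_ring_1) kqmod \<Rightarrow> 'a set \<Rightarrow> ('a,'k) kqmod" where
  "sub_mod M S = M\<lparr>mcar := mspan M S\<rparr>"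

definition coset :: "('a,'k) kqmod \<Rightarrow> 'a set \<Rightarrow> 'a \<Rightarrow> 'a set" where
  "coset M I x = {madd M x y | y. y \<in> I}"

definition quot_mod :: "('a,'k) kqmod \<Rightarrow> 'a set \<Rightarrow> ('a set,'k) kqmod" where
  "quot_mod M I =
     \<lparr>mcar = coset M I ` mcar M,
      madd = (\<lambda>A B. coset M I (madd M (SOME a. a \<in> A) (SOME b. b \<in> B))),
      mzero = coset M I (mzero M),
      mact = (\<lambda>A r. coset M I (mact M (SOME a. a \<in> A) r))\<rparr>"

text \<open>omega_1 is represented by a wellordered type 'w which is uncountable and all of whose
  proper initial segments are countable (this determines it up to isomorphism).\<close>

definition w0 :: "'w::wellorder" where "w0 = (LEAST x. True)"
definition w_succ :: "'w::wellorder \<Rightarrow> 'w" where "w_succ x = (LEAST y. x < y)"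
definition is_lim :: "'w::wellorder \<Rightarrow> bool" where
  "is_lim a \<longleftrightarrow> a \<noteq> w0 \<and> \<not> (\<exists>b. a = w_succ b)"
definition lim_or_zero :: "'w::wellorder \<Rightarrow> bool" where
  "lim_or_zero a \<longleftrightarrow> a = w0 \<or> is_lim a"

definition w_plus_succ :: "'w::wellorder \<Rightarrow> nat \<Rightarrow> 'w" where
  "w_plus_succ d n = (w_succ ^^ Suc n) d"

definition n_of :: "'w::wellorder \<Rightarrow> nat" where
  "n_of g = (THE n. \<exists>d. lim_or_zero d \<and> g = w_plus_succ d n)"

definition is_ladder :: "('w::wellorder \<Rightarrow> nat \<Rightarrow> 'w) \<Rightarrow> bool" where
  "is_ladder z \<longleftrightarrow> (\<forall>a. is_lim a \<longrightarrow>
      strict_mono (z a) \<and> (\<forall>n. z a n < a) \<and> (\<forall>b<a. \<exists>n. b \<le> z a n) \<and>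
      (\<forall>n. \<exists>d<a. lim_or_zero d \<and> z a n = w_plus_succ d n))"

text \<open>F = direct sum over xi of F^xi; an element is f xi n, the n-th KQ-coordinate at xi
  (for non-limit xi only n = 0 is used).\<close>
definition F_mod :: "('w::wellorder \<Rightarrow> nat \<Rightarrow> 'k::comm_ring_1 kqel, 'k) kqmod" where
  "F_mod = \<lparr>mcar = {f. finite {(xi,n). f xi n \<noteq> (\<lambda>_. 0)} \<and> (\<forall>xi n. kq (f xi n)) \<and>
                      (\<forall>xi n. \<not> is_lim xi \<and> n \<noteq> 0 \<longrightarrow> f xi n = (\<lambda>_. 0))},
            madd = (\<lambda>f g xi n p. f xi n p + g xi n p),
            mzero = (\<lambda>_ _ _. 0),
            mact = (\<lambda>f r xi n. kq_mult (f xi n) r)\<rparr>"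

definition eF :: "'w::wellorder \<Rightarrow> nat \<Rightarrow> 'w \<Rightarrow> nat \<Rightarrow> 'k::comm_ring_1 kqel" where
  "eF xi m = (\<lambda>xi' n. if xi' = xi \<and> n = 0 then kq_e m else (\<lambda>_. 0))"

definition rel_gen :: "('w::wellorder \<Rightarrow> nat \<Rightarrow> 'w) \<Rightarrow> 'w \<Rightarrow> nat \<Rightarrow> ('w \<Rightarrow> nat \<Rightarrow> 'k::comm_ring_1 kqel)" where
  "rel_gen z a n = (\<lambda>xi k p. eF (z a n) n xi k p - eF a n xi k p
                            + kq_mult (eF a (Suc n) xi k) (kq_a n) p)"

definition G_sub :: "('w::wellorder \<Rightarrow> nat \<Rightarrow> 'w) \<Rightarrow> 'w \<Rightarrow> ('w \<Rightarrow> nat \<Rightarrow> 'k::comm_ring_1 kqel) set" where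
  "G_sub z a = mspan F_mod (range (rel_gen z a))"

definition I_sub :: "('w::wellorder \<Rightarrow> nat \<Rightarrow> 'w) \<Rightarrow> ('w \<Rightarrow> nat \<Rightarrow> 'k::comm_ring_1 kqel) set" where
  "I_sub z = mspan F_mod (\<Union>a\<in>{a. is_lim a}. G_sub z a)"

definition M_omega1 :: "('w::wellorder \<Rightarrow> nat \<Rightarrow> 'w) \<Rightarrow> (('w \<Rightarrow> nat \<Rightarrow> 'k::comm_ring_1 kqel) set, 'k) kqmod" where
  "M_omega1 z = sub_mod (quot_mod F_mod (I_sub z))
     ({coset F_mod (I_sub z) (eF g (n_of g)) | g. g \<noteq> w0 \<and> \<not> is_lim g} \<union>
      {coset F_mod (I_sub z) (eF a n) | a n. is_lim a})"

definition DSum_KQ :: "('w \<Rightarrow> 'k::comm_ring_1 kqel, 'k) kqmod" where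
  "DSum_KQ = \<lparr>mcar = {g. finite {xi. g xi \<noteq> (\<lambda>_. 0)} \<and> (\<forall>xi. kq (g xi))},
             madd = (\<lambda>f g xi p. f xi p + g xi p),
             mzero = (\<lambda>_ _. 0),
             mact = (\<lambda>f r xi. kq_mult (f xi) r)\<rparr>"

end

theory Submission
  imports Defs
begin


lemma kq_mult_apply: "kq_mult x y (s,u) = (\<Sum>t\<in>{u..s}. x (s,t) * y (t,u))"
  by (simp add: kq_mult_def)

lemma kq_mult_assoc: "kq_mult (kq_mult x y) z = kq_mult x (kq_mult y z)"
proof (rule ext, clarify)
  fix s u
  have L: "kq_mult (kq_mult x y) z (s,u) = (\<Sum>t\<in>{u..s}. \<Sum>w\<in>{u..s}. if t \<le> w then x (s,w) * y (w,t) * z (t,u) else 0)"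
  proof -
    have "kq_mult (kq_mult x y) z (s,u) = (\<Sum>t\<in>{u..s}. \<Sum>w\<in>{t..s}. x (s,w) * y (w,t) * z (t,u))"
      by (simp add: kq_mult_def sum_distrib_right)
    also have "\<dots> = (\<Sum>t\<in>{u..s}. \<Sum>w\<in>{u..s}. if t \<le> w then x (s,w) * y (w,t) * z (t,u) else 0)"
    proof (rule sum.cong[OF refl])
      fix t assume "t \<in> {u..s}"
      then have "{w \<in> {u..s}. t \<le> w} = {t..s}" by auto
      then show "(\<Sum>w\<in>{t..s}. x (s,w) * y (w,t) * z (t,u)) = (\<Sum>w\<in>{u..s}. if t \<le> w then x (s,w) * y (w,t) * z (t,u) else 0)"
        using sum.inter_filter[of "{u..s}" _ "\<lambda>w. t \<le> w"] by simp
    qed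
    finally show ?thesis .
  qed
  have R: "kq_mult x (kq_mult y z) (s,u) = (\<Sum>w\<in>{u..s}. \<Sum>t\<in>{u..s}. if t \<le> w then x (s,w) * y (w,t) * z (t,u) else 0)"
  proof -
    have "kq_mult x (kq_mult y z) (s,u) = (\<Sum>w\<in>{u..s}. \<Sum>t\<in>{u..w}. x (s,w) * y (w,t) * z (t,u))"
      by (simp add: kq_mult_def sum_distrib_left mult.assoc)
    also have "\<dots> = (\<Sum>w\<in>{u..s}. \<Sum>t\<in>{u..s}. if t \<le> w then x (s,w) * y (w,t) * z (t,u) else 0)"
    proof (rule sum.cong[OF refl])
      fix w assume "w \<in> {u..s}"
      then have "{t \<in> {u..s}. t \<le> w} = {u..w}" by auto
      then show "(\<Sum>t\<in>{u..w}. x (s,w) * y (w,t) * z (t,u)) = (\<Sum>t\<in>{u..s}. if t \<le> w then x (s,w) * y (w,t) * z (t,u) else 0)"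
        using sum.inter_filter[of "{u..s}" _ "\<lambda>t. t \<le> w"] by simp
    qed
    finally show ?thesis .
  qed
  show "kq_mult (kq_mult x y) z (s,u) = kq_mult x (kq_mult y z) (s,u)"
    unfolding L R by (rule sum.swap)
qed

lemma kq_mult_add_left: "kq_mult (\<lambda>p. x p + y p) r = (\<lambda>p. kq_mult x r p + kq_mult y r p)"
  by (auto simp: kq_mult_def distrib_right sum.distrib)
lemma kq_mult_add_right: "kq_mult r (\<lambda>p. x p + y p) = (\<lambda>p. kq_mult r x p + kq_mult r y p)"
  by (auto simp: kq_mult_def distrib_left sum.distrib)
lemma kq_mult_diff_left: "kq_mult (\<lambda>p. x p - y p) r = (\<lambda>p. kq_mult x r p - kq_mult y r p)"
  by (auto simp: kq_mult_def left_diff_distrib sum_subtractf)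
lemma kq_mult_neg_left: "kq_mult (\<lambda>p. - x p) r = (\<lambda>p. - kq_mult x r p)"
  by (auto simp: kq_mult_def sum_negf)
lemma kq_mult_neg_right: "kq_mult r (\<lambda>p. - x p) = (\<lambda>p. - kq_mult r x p)"
  by (auto simp: kq_mult_def sum_negf)
lemma kq_mult_zero_left[simp]: "kq_mult (\<lambda>p. 0) r = (\<lambda>p. 0)"
  by (auto simp: kq_mult_def)
lemma kq_mult_zero_right[simp]: "kq_mult r (\<lambda>p. 0) = (\<lambda>p. 0)"
  by (auto simp: kq_mult_def)

lemma kq_zero[simp]: "kq (\<lambda>p. 0)" by (simp add: kq_def)
lemma kq_add: "kq x \<Longrightarrow> kq y \<Longrightarrow> kq (\<lambda>p. x p + y p)"
  unfolding kq_def
  by (auto intro: finite_subset[of _ "{p. x p \<noteq> 0} \<union> {p. y p \<noteq> 0}"])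
lemma kq_neg: "kq x \<Longrightarrow> kq (\<lambda>p. - x p)"
  unfolding kq_def by auto
lemma kq_diff: "kq x \<Longrightarrow> kq y \<Longrightarrow> kq (\<lambda>p. x p - y p)"
  unfolding kq_def
  by (auto intro: finite_subset[of _ "{p. x p \<noteq> 0} \<union> {p. y p \<noteq> 0}"])

lemma kq_mult_kq: assumes "kq x" "kq y" shows "kq (kq_mult x y)"
proof -
  let ?A = "{p. x p \<noteq> 0}" let ?B = "{p. y p \<noteq> 0}"
  have "{p. kq_mult x y p \<noteq> 0} \<subseteq> (\<lambda>(a,b). (fst a, snd b)) ` (?A \<times> ?B)"
  proof
    fix p assume "p \<in> {p. kq_mult x y p \<noteq> 0}"
    then obtain s u where p: "p = (s,u)" and ne: "(\<Sum>t\<in>{u..s}. x (s,t) * y (t,u)) \<noteq> 0"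
      by (cases p) (auto simp: kq_mult_def)
    then obtain t where "x (s,t) * y (t,u) \<noteq> 0" by (meson sum.neutral)
    then have "x (s,t) \<noteq> 0" "y (t,u) \<noteq> 0" by auto
    then show "p \<in> (\<lambda>(a,b). (fst a, snd b)) ` (?A \<times> ?B)"
      using p by (auto intro!: image_eqI[of _ _ "((s,t),(t,u))"])
  qed
  moreover have "finite ((\<lambda>(a,b). (fst a, snd b)) ` (?A \<times> ?B))"
    using assms by (auto simp: kq_def)
  ultimately have "finite {p. kq_mult x y p \<noteq> 0}" by (rule finite_subset)
  moreover have "\<forall>s t. s < t \<longrightarrow> kq_mult x y (s,t) = 0" by (simp add: kq_mult_def)
  ultimately show ?thesis by (simp add: kq_def)
qed

lemma kq_e[simp]: "kq (kq_e v)" by (simp add: kq_def kq_e_def)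
lemma kq_a[simp]: "kq (kq_a v)" by (simp add: kq_def kq_a_def)
lemma kq_idem: "finite V \<Longrightarrow> kq (kq_idem V)"
proof -
  assume "finite V"
  have "{p. kq_idem V p \<noteq> (0::'a)} \<subseteq> (\<lambda>v. (v,v)) ` V" by (auto simp: kq_idem_def)
  then have fin: "finite {p. kq_idem V p \<noteq> (0::'a)}" using \<open>finite V\<close> by (rule finite_subset[OF _ finite_imageI])
  have "\<forall>s t. s < t \<longrightarrow> kq_idem V (s,t) = (0::'a)" by (simp add: kq_idem_def)
  then show ?thesis using fin unfolding kq_def by blast
qed


section \<open>omega_1 facts\<close>

lemma countable_bounded:
  assumes unc: "uncountable (UNIV :: 'w::wellorder set)"
    and cnt: "\<forall>x::'w. countable {y. y < x}"
    and X: "countable (X :: 'w set)"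
  shows "\<exists>b. \<forall>x\<in>X. x < b"
proof (rule ccontr)
  assume "\<not> ?thesis"
  then have "\<forall>b. \<exists>x\<in>X. b \<le> x" by (auto simp: not_less)
  then have "UNIV \<subseteq> (\<Union>x\<in>X. {y. y < x} \<union> {x})" by (force simp: le_less)
  moreover have "countable (\<Union>x\<in>X. {y. y < x} \<union> {x})" using X cnt by auto
  ultimately have "countable (UNIV :: 'w set)" by (rule countable_subset)
  then show False using unc by simp
qed

lemma no_max:
  assumes unc: "uncountable (UNIV :: 'w::wellorder set)"
    and cnt: "\<forall>x::'w. countable {y. y < x}"
  shows "\<exists>y. (x::'w) < y"
  using countable_bounded[OF unc cnt, of "{x}"] by auto

lemma w_succ_gt: "\<exists>y. (x::'w::wellorder) < y \<Longrightarrow> x < w_succ x"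
  unfolding w_succ_def by (rule LeastI_ex)

lemma w_succ_least: "(x::'w::wellorder) < y \<Longrightarrow> w_succ x \<le> y"
  unfolding w_succ_def by (rule Least_le)

lemma succ_not_lim: "\<not> is_lim (w_succ b)"
  by (auto simp: is_lim_def)

lemma wps_not_lim: "\<not> is_lim (w_plus_succ d n)"
  by (simp add: w_plus_succ_def succ_not_lim)


section \<open>F and N\<close>

lemma Fcar: "(f \<in> mcar (F_mod :: ('w::wellorder \<Rightarrow> nat \<Rightarrow> 'k::comm_ring_1 kqel, 'k) kqmod)) \<longleftrightarrow>
   finite {(xi,n). f xi n \<noteq> (\<lambda>_. 0)} \<and> (\<forall>xi n. kq (f xi n)) \<and>
   (\<forall>xi n. \<not> is_lim xi \<and> n \<noteq> 0 \<longrightarrow> f xi n = (\<lambda>_. 0))"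
  by (simp add: F_mod_def)

lemma F_ops[simp]:
  "madd F_mod = (\<lambda>f g xi n p. f xi n p + g xi n p)"
  "mzero F_mod = (\<lambda>_ _ _. 0)"
  "mact F_mod = (\<lambda>f r xi n. kq_mult (f xi n) r)"
  by (simp_all add: F_mod_def)

lemma Fcar_add: "f \<in> mcar F_mod \<Longrightarrow> g \<in> mcar F_mod \<Longrightarrow> (\<lambda>xi n p. f xi n p + g xi n p) \<in> mcar F_mod"
proof -
  assume f: "f \<in> mcar F_mod" and g: "g \<in> mcar F_mod"
  have "{(xi,n). (\<lambda>p. f xi n p + g xi n p) \<noteq> (\<lambda>_. 0)} \<subseteq> {(xi,n). f xi n \<noteq> (\<lambda>_. 0)} \<union> {(xi,n). g xi n \<noteq> (\<lambda>_. 0)}"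
    by auto
  then show ?thesis using f g unfolding Fcar by (auto intro: finite_subset kq_add)
qed

lemma Fcar_neg: "f \<in> mcar F_mod \<Longrightarrow> (\<lambda>xi n p. - f xi n p) \<in> mcar F_mod"
proof -
  assume f: "f \<in> mcar F_mod"
  have "{(xi,n). (\<lambda>p. - f xi n p) \<noteq> (\<lambda>_. 0)} = {(xi,n). f xi n \<noteq> (\<lambda>_. 0)}"
    by (auto simp: fun_eq_iff)
  then show ?thesis using f unfolding Fcar by (auto intro: kq_neg)
qed

lemma Fcar_zero: "(\<lambda>_ _ _. 0) \<in> mcar F_mod"
  unfolding Fcar by simp

lemma Fcar_act: "f \<in> mcar F_mod \<Longrightarrow> kq r \<Longrightarrow> (\<lambda>xi n. kq_mult (f xi n) r) \<in> mcar F_mod"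
proof -
  assume f: "f \<in> mcar F_mod" and r: "kq r"
  have "{(xi,n). kq_mult (f xi n) r \<noteq> (\<lambda>_. 0)} \<subseteq> {(xi,n). f xi n \<noteq> (\<lambda>_. 0)}"
    by auto
  then show ?thesis using f r unfolding Fcar by (auto intro: finite_subset kq_mult_kq)
qed

lemma eF_Fcar: "eF xi m \<in> mcar F_mod"
proof -
  have "{(xi',n). eF xi m xi' n \<noteq> (\<lambda>_. 0)} \<subseteq> {(xi,0)}" by (auto simp: eF_def)
  then show ?thesis unfolding Fcar by (auto intro: finite_subset simp: eF_def)
qed

lemma Ncar: "(g \<in> mcar (DSum_KQ :: ('w \<Rightarrow> 'k::comm_ring_1 kqel, 'k) kqmod)) \<longleftrightarrow>
   finite {xi. g xi \<noteq> (\<lambda>_. 0)} \<and> (\<forall>xi. kq (g xi))"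
  by (simp add: DSum_KQ_def)

lemma N_ops[simp]:
  "madd DSum_KQ = (\<lambda>f g xi p. f xi p + g xi p)"
  "mzero DSum_KQ = (\<lambda>_ _. 0)"
  "mact DSum_KQ = (\<lambda>f r xi. kq_mult (f xi) r)"
  by (simp_all add: DSum_KQ_def)

lemma Ncar_add: "f \<in> mcar DSum_KQ \<Longrightarrow> g \<in> mcar DSum_KQ \<Longrightarrow> (\<lambda>xi p. f xi p + g xi p) \<in> mcar DSum_KQ"
proof -
  assume f: "f \<in> mcar DSum_KQ" and g: "g \<in> mcar DSum_KQ"
  have "{xi. (\<lambda>p. f xi p + g xi p) \<noteq> (\<lambda>_. 0)} \<subseteq> {xi. f xi \<noteq> (\<lambda>_. 0)} \<union> {xi. g xi \<noteq> (\<lambda>_. 0)}"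
    by auto
  then show ?thesis using f g unfolding Ncar by (auto intro: finite_subset kq_add)
qed

lemma Ncar_neg: "f \<in> mcar DSum_KQ \<Longrightarrow> (\<lambda>xi p. - f xi p) \<in> mcar DSum_KQ"
proof -
  assume f: "f \<in> mcar DSum_KQ"
  have "{xi. (\<lambda>p. - f xi p) \<noteq> (\<lambda>_. 0)} = {xi. f xi \<noteq> (\<lambda>_. 0)}"
    by (auto simp: fun_eq_iff)
  then show ?thesis using f unfolding Ncar by (auto intro: kq_neg)
qed

lemma Ncar_diff: "f \<in> mcar DSum_KQ \<Longrightarrow> g \<in> mcar DSum_KQ \<Longrightarrow> (\<lambda>xi p. f xi p - g xi p) \<in> mcar DSum_KQ"
  using Ncar_add[OF _ Ncar_neg, of f g] by simp

lemma Ncar_zero: "(\<lambda>_ _. 0) \<in> mcar DSum_KQ"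
  unfolding Ncar by simp

lemma Ncar_act: "f \<in> mcar DSum_KQ \<Longrightarrow> kq r \<Longrightarrow> (\<lambda>xi. kq_mult (f xi) r) \<in> mcar DSum_KQ"
proof -
  assume f: "f \<in> mcar DSum_KQ" and r: "kq r"
  have "{xi. kq_mult (f xi) r \<noteq> (\<lambda>_. 0)} \<subseteq> {xi. f xi \<noteq> (\<lambda>_. 0)}"
    by auto
  then show ?thesis using f r unfolding Ncar by (auto intro: finite_subset kq_mult_kq)
qed

section \<open>The map H\<close>

definition Uall :: "'k::comm_ring_1 kqel" where
  "Uall = (\<lambda>(s,t). if t \<le> s then 1 else 0)"

definition Hmap :: "('w::wellorder \<Rightarrow> nat \<Rightarrow> 'k::comm_ring_1 kqel) \<Rightarrow> 'w \<Rightarrow> 'k kqel" where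
  "Hmap f = (\<lambda>xi. if is_lim xi then kq_mult Uall (f xi 0) else (\<lambda>_. 0))"

lemma Hmap_add: "Hmap (\<lambda>xi n p. f xi n p + g xi n p) = (\<lambda>xi p. Hmap f xi p + Hmap g xi p)"
  by (auto simp: Hmap_def kq_mult_add_right fun_eq_iff)

lemma Hmap_neg: "Hmap (\<lambda>xi n p. - f xi n p) = (\<lambda>xi p. - Hmap f xi p)"
  by (auto simp: Hmap_def kq_mult_neg_right fun_eq_iff)

lemma Hmap_zero: "Hmap (\<lambda>_ _ _. 0) = (\<lambda>_ _. 0)"
  by (auto simp: Hmap_def fun_eq_iff)

lemma Hmap_act: "Hmap (\<lambda>xi n. kq_mult (f xi n) r) = (\<lambda>xi. kq_mult (Hmap f xi) r)"
  by (auto simp: Hmap_def kq_mult_assoc fun_eq_iff)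

lemma Hmap_nonlim: "\<not> is_lim xi \<Longrightarrow> Hmap f xi = (\<lambda>_. 0)"
  by (simp add: Hmap_def)

lemma Uall_mult: "kq_mult Uall x (s,u) = (\<Sum>t\<in>{u..s}. x (t,u))"
  by (simp add: kq_mult_def Uall_def)

definition good :: "('w::wellorder \<Rightarrow> nat \<Rightarrow> 'k::comm_ring_1 kqel) \<Rightarrow> bool" where
  "good f \<longleftrightarrow> f \<in> mcar F_mod \<and> Hmap f \<in> mcar DSum_KQ"

lemma mspan_good:
  assumes "S \<subseteq> {f. good f}"
  shows "mspan F_mod S \<subseteq> {f. good f}"
proof
  fix x assume "x \<in> mspan F_mod S"
  then show "x \<in> {f. good f}"
  proof (induction rule: mspan.induct)
    case (gen s) then show ?case using assms by auto
  next
    case zero then show ?case by (simp add: good_def Fcar_zero Hmap_zero Ncar_zero)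
  next
    case (add x y) then show ?case by (simp add: good_def Fcar_add Hmap_add Ncar_add)
  next
    case (neg x y)
    have "y = (\<lambda>xi n p. - x xi n p)"
    proof (intro ext)
      fix xi n p
      have "x xi n p + y xi n p = 0"
        using fun_cong[OF fun_cong[OF fun_cong[OF neg.hyps(3)]], of xi n p] by simp
      then show "y xi n p = - x xi n p" by (simp add: eq_neg_iff_add_eq_0 add.commute)
    qed
    then show ?case using neg by (simp add: good_def Fcar_neg Hmap_neg Ncar_neg)
  next
    case (act x r) then show ?case by (simp add: good_def Fcar_act Hmap_act Ncar_act)
  qed
qed

lemma kq_e_a: "kq_mult (kq_e (Suc n)) (kq_a n) = kq_a n"
proof (rule ext, clarify)
  fix t u
  show "kq_mult (kq_e (Suc n)) (kq_a n) (t,u) = kq_a n (t,u)"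
  proof (cases "t = Suc n \<and> u = n")
    case True
    then have "kq_mult (kq_e (Suc n)) (kq_a n) (t,u) = (\<Sum>w\<in>{u..t}. if w = Suc n then 1 else 0)"
      by (auto simp: kq_mult_def kq_e_def kq_a_def intro!: sum.cong)
    then show ?thesis using True by (simp add: kq_a_def)
  next
    case False
    then have "kq_mult (kq_e (Suc n)) (kq_a n) (t,u) = 0"
      by (auto simp: kq_mult_def kq_e_def kq_a_def intro!: sum.neutral)
    then show ?thesis using False by (auto simp: kq_a_def)
  qed
qed

lemma H_rel_val: "kq_mult Uall (\<lambda>p. - kq_e n p + kq_a n p) = (\<lambda>p. - kq_e n p)"
proof (rule ext, clarify)
  fix s u
  have e: "kq_mult Uall (\<lambda>p. - kq_e n p + kq_a n p) (s,u)
      = (\<Sum>t\<in>{u..s}. (if u = n \<and> t = Suc n then 1 else 0) - (if u = n \<and> t = n then 1 else 0))"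
    unfolding Uall_mult by (rule sum.cong) (auto simp: kq_e_def kq_a_def)
  show "kq_mult Uall (\<lambda>p. - kq_e n p + kq_a n p) (s,u) = - kq_e n (s,u)"
  proof (cases "u = n")
    case True
    then show ?thesis unfolding e by (simp add: sum_subtractf kq_e_def)
  next
    case False
    then show ?thesis unfolding e by (simp add: kq_e_def)
  qed
qed


lemma ladder_facts:
  assumes "is_ladder z" "is_lim a"
  shows "z a n < a" "\<not> is_lim (z a n)"
proof -
  from assms have "\<forall>n. z a n < a" "\<forall>n. \<exists>d<a. lim_or_zero d \<and> z a n = w_plus_succ d n"
    unfolding is_ladder_def by blast+
  then show "z a n < a" "\<not> is_lim (z a n)" using wps_not_lim by metis+
qed

lemma rel_gen_Fcar: "rel_gen z a n \<in> mcar F_mod"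
proof -
  have eq: "rel_gen z a n = (\<lambda>xi k p. (\<lambda>xi k p. eF (z a n) n xi k p + (\<lambda>xi k p. - eF a n xi k p) xi k p) xi k p
      + (\<lambda>xi k. kq_mult (eF a (Suc n) xi k) (kq_a n)) xi k p)"
    by (simp add: rel_gen_def fun_eq_iff)
  show ?thesis unfolding eq
    by (intro Fcar_add Fcar_neg Fcar_act eF_Fcar kq_a)
qed

lemma Hmap_rel:
  fixes z :: "'w::wellorder \<Rightarrow> nat \<Rightarrow> 'w"
  assumes "is_lim a" "\<not> is_lim (z a n)"
  shows "Hmap (rel_gen z a n) = (\<lambda>xi. if xi = a then (\<lambda>p. - kq_e n p) else (\<lambda>_. (0::'k::comm_ring_1)))"
proof
  fix xi :: 'w
  show "Hmap (rel_gen z a n) xi = (if xi = a then (\<lambda>p. - kq_e n p) else (\<lambda>_. (0::'k)))"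
  proof (cases "is_lim xi")
    case False
    then have "xi \<noteq> a" using assms by auto
    then show ?thesis using False by (simp add: Hmap_def)
  next
    case True
    then have ng: "xi \<noteq> z a n" using assms by auto
    show ?thesis
    proof (cases "xi = a")
      case True
      have r: "rel_gen z a n xi 0 = (\<lambda>p. - kq_e n p + kq_a n p)"
        using True ng kq_e_a[of n] by (simp add: rel_gen_def eF_def fun_eq_iff)
      have "Hmap (rel_gen z a n) xi = kq_mult Uall (rel_gen z a n xi 0)"
        using \<open>is_lim xi\<close> by (simp add: Hmap_def)
      also have "\<dots> = (\<lambda>p. - kq_e n p)" unfolding r by (rule H_rel_val)
      finally show ?thesis using True by simp
    next
      case False
      have r: "rel_gen z a n xi 0 = (\<lambda>p. 0)"
        using False ng by (simp add: rel_gen_def eF_def fun_eq_iff)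
      have "Hmap (rel_gen z a n) xi = kq_mult Uall (rel_gen z a n xi 0)"
        using \<open>is_lim xi\<close> by (simp add: Hmap_def)
      also have "\<dots> = (\<lambda>p. 0)" unfolding r by simp
      finally show ?thesis using False by simp
    qed
  qed
qed

lemma rel_good:
  fixes z :: "'w::wellorder \<Rightarrow> nat \<Rightarrow> 'w"
  assumes "is_lim a" "\<not> is_lim (z a n)"
  shows "good (rel_gen z a n :: 'w::wellorder \<Rightarrow> nat \<Rightarrow> 'k::comm_ring_1 kqel)"
proof -
  have fin: "{xi. (if xi = a then (\<lambda>p. - kq_e n p) else (\<lambda>_. (0::'k))) \<noteq> (\<lambda>_. 0)} \<subseteq> {a}" by auto
  have "(\<lambda>xi. if xi = a then (\<lambda>p. - kq_e n p) else (\<lambda>_. (0::'k))) \<in> mcar DSum_KQ"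
    unfolding Ncar using finite_subset[OF fin] by (auto intro: kq_neg)
  then show ?thesis unfolding good_def Hmap_rel[where z=z and a=a and n=n, OF assms]
    using rel_gen_Fcar by blast
qed

lemma I_good:
  assumes "is_ladder z"
  shows "I_sub z \<subseteq> {f :: 'w::wellorder \<Rightarrow> nat \<Rightarrow> 'k::comm_ring_1 kqel. good f}"
proof -
  have "\<And>a. is_lim a \<Longrightarrow> G_sub z a \<subseteq> {f :: 'w \<Rightarrow> nat \<Rightarrow> 'k kqel. good f}"
    unfolding G_sub_def
    by (rule mspan_good) (auto intro!: rel_good ladder_facts[OF assms])
  then show ?thesis unfolding I_sub_def by (intro mspan_good) blast
qed

lemma rel_in_I: "is_lim a \<Longrightarrow> rel_gen z a n \<in> I_sub z"
  unfolding I_sub_def G_sub_def by (blast intro: mspan.gen)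


context
  fixes z :: "'w::wellorder \<Rightarrow> nat \<Rightarrow> 'w"
  assumes lad: "is_ladder z"
begin

abbreviation II :: "('w \<Rightarrow> nat \<Rightarrow> 'k::comm_ring_1 kqel) set" where "II \<equiv> I_sub z"

lemma I_Fcar: "y \<in> II \<Longrightarrow> y \<in> mcar F_mod"
  using I_good[OF lad] by (auto simp: good_def)

lemma I_H: "y \<in> II \<Longrightarrow> Hmap y \<in> mcar DSum_KQ"
  using I_good[OF lad] by (auto simp: good_def)

lemma I_zero: "(\<lambda>_ _ _. 0) \<in> II"
  using mspan.zero[of F_mod] unfolding I_sub_def by simp

lemma I_add: "x \<in> II \<Longrightarrow> y \<in> II \<Longrightarrow> (\<lambda>xi n p. x xi n p + y xi n p) \<in> II"
  using mspan.add[of x F_mod _ y] unfolding I_sub_def by simp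

lemma I_neg: "x \<in> II \<Longrightarrow> (\<lambda>xi n p. - x xi n p) \<in> II"
proof -
  assume x: "x \<in> II"
  have "madd F_mod x (\<lambda>xi n p. - x xi n p) = mzero F_mod" by simp
  then show ?thesis using mspan.neg[of x F_mod _ "\<lambda>xi n p. - x xi n p"] x Fcar_neg[OF I_Fcar[OF x]]
    unfolding I_sub_def by blast
qed

lemma I_act: "x \<in> II \<Longrightarrow> kq r \<Longrightarrow> (\<lambda>xi n. kq_mult (x xi n) r) \<in> II"
  using mspan.act[of x F_mod _ r] unfolding I_sub_def by simp

lemma coset_F: "coset F_mod II f = {(\<lambda>xi n p. f xi n p + y xi n p) | y. y \<in> II}"
  by (simp add: coset_def)

lemma coset_I: "y \<in> II \<Longrightarrow> a = (\<lambda>xi n p. f xi n p + y xi n p) \<Longrightarrow> a \<in> coset F_mod II f"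
  unfolding coset_F by blast

lemma coset_eq: "d \<in> II \<Longrightarrow> coset F_mod II (\<lambda>xi n p. f xi n p + d xi n p) = coset F_mod II f"
proof -
  assume d: "d \<in> II"
  show ?thesis
  proof (rule set_eqI)
    fix a
    show "a \<in> coset F_mod II (\<lambda>xi n p. f xi n p + d xi n p) \<longleftrightarrow> a \<in> coset F_mod II f"
    proof
      assume "a \<in> coset F_mod II (\<lambda>xi n p. f xi n p + d xi n p)"
      then obtain y where y: "y \<in> II" "a = (\<lambda>xi n p. f xi n p + d xi n p + y xi n p)"
        unfolding coset_F by auto
      then have "a = (\<lambda>xi n p. f xi n p + (\<lambda>xi n p. d xi n p + y xi n p) xi n p)"
        by (simp only: add.assoc)
      then show "a \<in> coset F_mod II f" by (rule coset_I[OF I_add[OF d y(1)]])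
    next
      assume "a \<in> coset F_mod II f"
      then obtain y where y: "y \<in> II" "a = (\<lambda>xi n p. f xi n p + y xi n p)"
        unfolding coset_F by auto
      then have "a = (\<lambda>xi n p. f xi n p + d xi n p + (\<lambda>xi n p. - d xi n p + y xi n p) xi n p)"
        by (simp only: add.assoc add_minus_cancel)
      then show "a \<in> coset F_mod II (\<lambda>xi n p. f xi n p + d xi n p)"
        by (rule coset_I[OF I_add[OF I_neg[OF d] y(1)]])
    qed
  qed
qed

lemma coset_self: "f \<in> coset F_mod II f"
  unfolding coset_F using I_zero by force

lemma coset_memD: "a \<in> coset F_mod II f \<Longrightarrow> \<exists>y\<in>II. a = (\<lambda>xi n p. f xi n p + y xi n p)"
  unfolding coset_F by auto

lemma coset_some: "coset F_mod II (SOME a. a \<in> coset F_mod II f) = coset F_mod II f"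
proof -
  have "(SOME a. a \<in> coset F_mod II f) \<in> coset F_mod II f" by (rule someI[where x=f], rule coset_self)
  then obtain y where "y \<in> II" "(SOME a. a \<in> coset F_mod II f) = (\<lambda>xi n p. f xi n p + y xi n p)"
    using coset_memD by blast
  then show ?thesis using coset_eq by simp
qed

lemma coset_same: "coset F_mod II f = coset F_mod II g \<Longrightarrow> \<exists>y\<in>II. g = (\<lambda>xi n p. f xi n p + y xi n p)"
  using coset_self[of g] coset_memD by blast

lemma Q_ops:
  "madd (quot_mod F_mod II) (coset F_mod II f) (coset F_mod II g) = coset F_mod II (\<lambda>xi n p. f xi n p + g xi n p)"
  "mzero (quot_mod F_mod II) = coset F_mod II (\<lambda>_ _ _. 0)"
  "kq r \<Longrightarrow> mact (quot_mod F_mod II) (coset F_mod II f) r = coset F_mod II (\<lambda>xi n. kq_mult (f xi n) r)"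
proof -
  obtain y where y: "y \<in> II" "(SOME a. a \<in> coset F_mod II f) = (\<lambda>xi n p. f xi n p + y xi n p)"
    using coset_memD someI[where x=f and P="\<lambda>a. a \<in> coset F_mod II f", OF coset_self] by blast
  obtain y' where y': "y' \<in> II" "(SOME a. a \<in> coset F_mod II g) = (\<lambda>xi n p. g xi n p + y' xi n p)"
    using coset_memD someI[where x=g and P="\<lambda>a. a \<in> coset F_mod II g", OF coset_self] by blast
  have "madd (quot_mod F_mod II) (coset F_mod II f) (coset F_mod II g)
     = coset F_mod II (\<lambda>xi n p. (\<lambda>xi n p. f xi n p + g xi n p) xi n p + (\<lambda>xi n p. y xi n p + y' xi n p) xi n p)"
    by (simp add: quot_mod_def y y' add_ac)
  also have "\<dots> = coset F_mod II (\<lambda>xi n p. f xi n p + g xi n p)"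
    by (rule coset_eq[OF I_add[OF y(1) y'(1)]])
  finally show "madd (quot_mod F_mod II) (coset F_mod II f) (coset F_mod II g) = coset F_mod II (\<lambda>xi n p. f xi n p + g xi n p)" .
  show "mzero (quot_mod F_mod II) = coset F_mod II (\<lambda>_ _ _. 0)" by (simp add: quot_mod_def)
  assume r: "kq r"
  have "mact (quot_mod F_mod II) (coset F_mod II f) r
     = coset F_mod II (\<lambda>xi n p. (\<lambda>xi n. kq_mult (f xi n) r) xi n p + (\<lambda>xi n. kq_mult (y xi n) r) xi n p)"
    by (simp add: quot_mod_def y kq_mult_add_left)
  also have "\<dots> = coset F_mod II (\<lambda>xi n. kq_mult (f xi n) r)"
    by (rule coset_eq[OF I_act[OF y(1) r]])
  finally show "mact (quot_mod F_mod II) (coset F_mod II f) r = coset F_mod II (\<lambda>xi n. kq_mult (f xi n) r)" .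
qed

lemma Q_car: "mcar (quot_mod F_mod II) = coset F_mod II ` mcar F_mod"
  by (simp add: quot_mod_def)

lemma M_ops:
  "madd (M_omega1 z) = madd (quot_mod F_mod II)"
  "mzero (M_omega1 z) = mzero (quot_mod F_mod II)"
  "mact (M_omega1 z) = mact (quot_mod F_mod II)"
  by (simp_all add: M_omega1_def sub_mod_def)

lemma M_car: "mcar (M_omega1 z :: (('w \<Rightarrow> nat \<Rightarrow> 'k::comm_ring_1 kqel) set, 'k) kqmod) =
  mspan (quot_mod F_mod II)
     ({coset F_mod II (eF g (n_of g)) | g. g \<noteq> w0 \<and> \<not> is_lim g} \<union>
      {coset F_mod II (eF a n) | a n. is_lim a})"
  by (simp add: M_omega1_def sub_mod_def)

lemma M_rep: "m \<in> mcar (M_omega1 z :: (('w \<Rightarrow> nat \<Rightarrow> 'k::comm_ring_1 kqel) set, 'k) kqmod) \<Longrightarrow>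
   \<exists>f\<in>mcar F_mod. m = coset F_mod II f"
  unfolding M_car
proof (induction rule: mspan.induct)
  case (gen s) then show ?case using eF_Fcar by blast
next
  case zero then show ?case using Fcar_zero Q_ops(2) by blast
next
  case (add x y)
  then obtain f g where "f \<in> mcar F_mod" "x = coset F_mod II f" "g \<in> mcar F_mod" "y = coset F_mod II g" by blast
  then show ?case using Q_ops(1)[of f g] Fcar_add[of f g] by auto
next
  case (neg x y) then show ?case using Q_car by blast
next
  case (act x r)
  then obtain f where "f \<in> mcar F_mod" "x = coset F_mod II f" by blast
  then show ?case using Q_ops(3)[OF act.hyps(2), of f] Fcar_act[OF _ act.hyps(2), of f] by auto
qed

end


definition Ecar :: "('w::wellorder \<Rightarrow> nat \<Rightarrow> 'w) \<Rightarrow> (('w \<Rightarrow> 'k::comm_ring_1 kqel) \<times> ('w \<Rightarrow> nat \<Rightarrow> 'k kqel) set) set" where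
  "Ecar z = {e. snd e \<in> mcar (M_omega1 z) \<and>
     (\<exists>f\<in>mcar F_mod. snd e = coset F_mod (I_sub z) f \<and> (\<lambda>xi p. fst e xi p - Hmap f xi p) \<in> mcar DSum_KQ)}"

definition Emod :: "('w::wellorder \<Rightarrow> nat \<Rightarrow> 'w) \<Rightarrow> (('w \<Rightarrow> 'k::comm_ring_1 kqel) \<times> ('w \<Rightarrow> nat \<Rightarrow> 'k kqel) set, 'k) kqmod" where
  "Emod z = \<lparr>mcar = Ecar z,
     madd = (\<lambda>e e'. (\<lambda>xi p. fst e xi p + fst e' xi p, madd (M_omega1 z) (snd e) (snd e'))),
     mzero = (\<lambda>_ _. 0, mzero (M_omega1 z)),
     mact = (\<lambda>e r. (\<lambda>xi. kq_mult (fst e xi) r, mact (M_omega1 z) (snd e) r))\<rparr>"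

lemma Emod_simps[simp]:
  "mcar (Emod z) = Ecar z"
  "madd (Emod z) e e' = (\<lambda>xi p. fst e xi p + fst e' xi p, madd (M_omega1 z) (snd e) (snd e'))"
  "mzero (Emod z) = (\<lambda>_ _. 0, mzero (M_omega1 z))"
  "mact (Emod z) e r = (\<lambda>xi. kq_mult (fst e xi) r, mact (M_omega1 z) (snd e) r)"
  by (simp_all add: Emod_def)

context
  fixes z :: "'w::wellorder \<Rightarrow> nat \<Rightarrow> 'w"
  assumes lad: "is_ladder z"
begin


lemma MM_add: "madd (M_omega1 z) (coset F_mod (I_sub z) f) (coset F_mod (I_sub z) g) = coset F_mod (I_sub z) (\<lambda>xi n p. f xi n p + g xi n p)"
  by (simp add: M_omega1_def sub_mod_def Q_ops(1)[OF lad])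
lemma MM_zero: "mzero (M_omega1 z) = coset F_mod (I_sub z) (\<lambda>_ _ _. 0)"
  by (simp add: M_omega1_def sub_mod_def Q_ops(2)[OF lad])
lemma MM_act: "kq r \<Longrightarrow> mact (M_omega1 z) (coset F_mod (I_sub z) f) r = coset F_mod (I_sub z) (\<lambda>xi n. kq_mult (f xi n) r)"
  by (simp add: M_omega1_def sub_mod_def Q_ops(3)[OF lad])

lemma MM_car_add: "x \<in> mcar (M_omega1 z) \<Longrightarrow> y \<in> mcar (M_omega1 z) \<Longrightarrow> madd (M_omega1 z) x y \<in> mcar (M_omega1 z)"
  unfolding M_car[OF lad] by (simp add: M_omega1_def sub_mod_def) (rule mspan.add)
lemma MM_car_zero: "mzero (M_omega1 z) \<in> mcar (M_omega1 z)"
  unfolding M_car[OF lad] by (simp add: M_omega1_def sub_mod_def) (rule mspan.zero)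
lemma MM_car_act: "x \<in> mcar (M_omega1 z) \<Longrightarrow> kq r \<Longrightarrow> mact (M_omega1 z) x r \<in> mcar (M_omega1 z)"
  unfolding M_car[OF lad] by (simp add: M_omega1_def sub_mod_def) (rule mspan.act)
lemma MM_car_gen: "is_lim a \<Longrightarrow> coset F_mod (I_sub z) (eF a n) \<in> mcar (M_omega1 z)"
  unfolding M_car[OF lad] by (rule mspan.gen) blast
lemma MM_car_neg: "f \<in> mcar F_mod \<Longrightarrow> coset F_mod (I_sub z) f \<in> mcar (M_omega1 z) \<Longrightarrow> coset F_mod (I_sub z) (\<lambda>xi n p. - f xi n p) \<in> mcar (M_omega1 z)"
proof -
  assume f: "f \<in> mcar F_mod" and m: "coset F_mod (I_sub z) f \<in> mcar (M_omega1 z)"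
  have "madd (quot_mod F_mod (I_sub z)) (coset F_mod (I_sub z) f) (coset F_mod (I_sub z) (\<lambda>xi n p. - f xi n p)) = mzero (quot_mod F_mod (I_sub z))"
    unfolding Q_ops[OF lad] by simp
  moreover have "coset F_mod (I_sub z) (\<lambda>xi n p. - f xi n p) \<in> mcar (quot_mod F_mod (I_sub z))"
    unfolding Q_car[OF lad] using Fcar_neg[OF f] by blast
  ultimately show ?thesis using m unfolding M_car[OF lad] by (blast intro: mspan.neg)
qed

lemma MM_rep: "m \<in> mcar (M_omega1 z) \<Longrightarrow> \<exists>f\<in>mcar F_mod. m = coset F_mod (I_sub z) f"
  by (rule M_rep[OF lad])

lemma EcarI: "coset F_mod (I_sub z) f \<in> mcar (M_omega1 z) \<Longrightarrow> f \<in> mcar F_mod \<Longrightarrow> (\<lambda>xi p. x xi p - Hmap f xi p) \<in> mcar DSum_KQ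
   \<Longrightarrow> (x, coset F_mod (I_sub z) f) \<in> Ecar z"
  unfolding Ecar_def by auto

lemma Ecar_all: "e \<in> Ecar z \<Longrightarrow> snd e = coset F_mod (I_sub z) g \<Longrightarrow> (\<lambda>xi p. fst e xi p - Hmap g xi p) \<in> mcar DSum_KQ"
proof -
  assume e: "e \<in> Ecar z" and g: "snd e = coset F_mod (I_sub z) g"
  then obtain f where f: "f \<in> mcar F_mod" "snd e = coset F_mod (I_sub z) f" "(\<lambda>xi p. fst e xi p - Hmap f xi p) \<in> mcar DSum_KQ"
    unfolding Ecar_def by blast
  then obtain y where y: "y \<in> I_sub z" "g = (\<lambda>xi n p. f xi n p + y xi n p)"
    using coset_same[OF lad] g by metis
  have "(\<lambda>xi p. fst e xi p - Hmap g xi p) = (\<lambda>xi p. (\<lambda>xi p. fst e xi p - Hmap f xi p) xi p - Hmap y xi p)"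
    unfolding y(2) Hmap_add by (simp add: algebra_simps)
  then show ?thesis using Ncar_diff[OF f(3) I_H[OF lad y(1)]] by simp
qed

lemma Ecar_snd: "e \<in> Ecar z \<Longrightarrow> snd e \<in> mcar (M_omega1 z)"
  unfolding Ecar_def by blast

lemma Ecar_rep: "e \<in> Ecar z \<Longrightarrow> \<exists>f\<in>mcar F_mod. snd e = coset F_mod (I_sub z) f \<and> (\<lambda>xi p. fst e xi p - Hmap f xi p) \<in> mcar DSum_KQ"
  unfolding Ecar_def by blast

end


lemma idem_right:
  assumes "\<forall>s u. s < u \<longrightarrow> y (s,u) = 0" "\<forall>s u. y (s,u) \<noteq> 0 \<longrightarrow> u \<in> V"
  shows "kq_mult y (kq_idem V) = y"
proof (rule ext, clarify)
  fix s u
  have "kq_mult y (kq_idem V) (s,u) = (\<Sum>t\<in>{u..s}. if t = u then (if u \<in> V then y (s,u) else 0) else 0)"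
    unfolding kq_mult_apply by (rule sum.cong) (auto simp: kq_idem_def)
  also have "\<dots> = y (s,u)"
  proof (cases "u \<le> s")
    case True
    then have "u \<in> {u..s}" by simp
    then show ?thesis using assms by (simp add: sum.delta) blast
  next
    case False then show ?thesis using assms by (simp add: not_le)
  qed
  finally show "kq_mult y (kq_idem V) (s,u) = y (s,u)" .
qed

lemma F_targets_finite:
  assumes "f \<in> mcar F_mod"
  shows "finite {u. \<exists>xi n s. f xi n (s,u) \<noteq> 0}"
proof -
  let ?S = "{(xi,n). f xi n \<noteq> (\<lambda>_. 0)}"
  have "{u. \<exists>xi n s. f xi n (s,u) \<noteq> 0} \<subseteq> snd ` (\<Union>q\<in>?S. {p. f (fst q) (snd q) p \<noteq> 0})"
  proof
    fix u assume "u \<in> {u. \<exists>xi n s. f xi n (s,u) \<noteq> 0}"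
    then obtain xi n s where "f xi n (s,u) \<noteq> 0" by blast
    then have "(xi,n) \<in> ?S" "(s,u) \<in> {p. f xi n p \<noteq> 0}" by auto
    then show "u \<in> snd ` (\<Union>q\<in>?S. {p. f (fst q) (snd q) p \<noteq> 0})" by force
  qed
  moreover have "finite (\<Union>q\<in>?S. {p. f (fst q) (snd q) p \<noteq> 0})"
    using assms unfolding Fcar kq_def by auto
  ultimately show ?thesis by (meson finite_imageI finite_subset)
qed

lemma N_targets_finite:
  assumes "d \<in> mcar DSum_KQ"
  shows "finite {u. \<exists>xi s. d xi (s,u) \<noteq> 0}"
proof -
  let ?S = "{xi. d xi \<noteq> (\<lambda>_. 0)}"
  have "{u. \<exists>xi s. d xi (s,u) \<noteq> 0} \<subseteq> snd ` (\<Union>q\<in>?S. {p. d q p \<noteq> 0})"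
  proof
    fix u assume "u \<in> {u. \<exists>xi s. d xi (s,u) \<noteq> 0}"
    then obtain xi s where "d xi (s,u) \<noteq> 0" by blast
    then have "xi \<in> ?S" "(s,u) \<in> {p. d xi p \<noteq> 0}" by auto
    then show "u \<in> snd ` (\<Union>q\<in>?S. {p. d q p \<noteq> 0})" by force
  qed
  moreover have "finite (\<Union>q\<in>?S. {p. d q p \<noteq> 0})"
    using assms unfolding Ncar kq_def by auto
  ultimately show ?thesis by (meson finite_imageI finite_subset)
qed

context
  fixes z :: "'w::wellorder \<Rightarrow> nat \<Rightarrow> 'w"
  assumes lad: "is_ladder z"
begin

lemma E_zero: "(\<lambda>_ _. 0, mzero (M_omega1 z)) \<in> Ecar z"
proof -
  show ?thesis unfolding MM_zero[OF lad]
    by (rule EcarI[OF lad]) (auto simp: MM_car_zero[OF lad, unfolded MM_zero[OF lad]] Fcar_zero Hmap_zero Ncar_zero)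
qed

lemma E_add: "e \<in> Ecar z \<Longrightarrow> e' \<in> Ecar z \<Longrightarrow> madd (Emod z) e e' \<in> Ecar z"
proof -
  assume e: "e \<in> Ecar z" and e': "e' \<in> Ecar z"
  obtain f where f: "f \<in> mcar F_mod" "snd e = coset F_mod (I_sub z) f" "(\<lambda>xi p. fst e xi p - Hmap f xi p) \<in> mcar DSum_KQ"
    using Ecar_rep[OF lad e] by blast
  obtain f' where f': "f' \<in> mcar F_mod" "snd e' = coset F_mod (I_sub z) f'" "(\<lambda>xi p. fst e' xi p - Hmap f' xi p) \<in> mcar DSum_KQ"
    using Ecar_rep[OF lad e'] by blast
  have m: "madd (M_omega1 z) (snd e) (snd e') = coset F_mod (I_sub z) (\<lambda>xi n p. f xi n p + f' xi n p)"
    using f(2) f'(2) MM_add[OF lad] by simp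
  have "madd (M_omega1 z) (snd e) (snd e') \<in> mcar (M_omega1 z)"
    using MM_car_add[OF lad Ecar_snd[OF lad e] Ecar_snd[OF lad e']] .
  moreover have "(\<lambda>xi p. (fst e xi p + fst e' xi p) - Hmap (\<lambda>xi n p. f xi n p + f' xi n p) xi p)
      = (\<lambda>xi p. (\<lambda>xi p. fst e xi p - Hmap f xi p) xi p + (\<lambda>xi p. fst e' xi p - Hmap f' xi p) xi p)"
    unfolding Hmap_add by (simp add: algebra_simps)
  ultimately have "(\<lambda>xi p. fst e xi p + fst e' xi p, coset F_mod (I_sub z) (\<lambda>xi n p. f xi n p + f' xi n p)) \<in> Ecar z"
    using m Ncar_add[OF f(3) f'(3)] Fcar_add[OF f(1) f'(1)] by (intro EcarI[OF lad]) auto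
  then show ?thesis using m by simp
qed

lemma E_act: "e \<in> Ecar z \<Longrightarrow> kq r \<Longrightarrow> mact (Emod z) e r \<in> Ecar z"
proof -
  assume e: "e \<in> Ecar z" and r: "kq r"
  obtain f where f: "f \<in> mcar F_mod" "snd e = coset F_mod (I_sub z) f" "(\<lambda>xi p. fst e xi p - Hmap f xi p) \<in> mcar DSum_KQ"
    using Ecar_rep[OF lad e] by blast
  have m: "mact (M_omega1 z) (snd e) r = coset F_mod (I_sub z) (\<lambda>xi n. kq_mult (f xi n) r)"
    using f(2) MM_act[OF lad r] by simp
  have "mact (M_omega1 z) (snd e) r \<in> mcar (M_omega1 z)"
    using MM_car_act[OF lad Ecar_snd[OF lad e] r] .
  moreover have "(\<lambda>xi p. kq_mult (fst e xi) r p - Hmap (\<lambda>xi n. kq_mult (f xi n) r) xi p)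
      = (\<lambda>xi. kq_mult ((\<lambda>xi p. fst e xi p - Hmap f xi p) xi) r)"
    unfolding Hmap_act by (simp add: kq_mult_diff_left)
  ultimately have "(\<lambda>xi. kq_mult (fst e xi) r, coset F_mod (I_sub z) (\<lambda>xi n. kq_mult (f xi n) r)) \<in> Ecar z"
    using m Ncar_act[OF f(3) r] Fcar_act[OF f(1) r] by (intro EcarI[OF lad]) auto
  then show ?thesis using m by simp
qed

lemma E_neg: "e \<in> Ecar z \<Longrightarrow> \<exists>e'\<in>Ecar z. madd (Emod z) e e' = mzero (Emod z)"
proof -
  assume e: "e \<in> Ecar z"
  obtain f where f: "f \<in> mcar F_mod" "snd e = coset F_mod (I_sub z) f" "(\<lambda>xi p. fst e xi p - Hmap f xi p) \<in> mcar DSum_KQ"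
    using Ecar_rep[OF lad e] by blast
  let ?e' = "(\<lambda>xi p. - fst e xi p, coset F_mod (I_sub z) (\<lambda>xi n p. - f xi n p))"
  have "(\<lambda>xi p. - fst e xi p - Hmap (\<lambda>xi n p. - f xi n p) xi p) = (\<lambda>xi p. - (\<lambda>xi p. fst e xi p - Hmap f xi p) xi p)"
    unfolding Hmap_neg by simp
  then have "?e' \<in> Ecar z"
    using MM_car_neg[OF lad f(1)] Ecar_snd[OF lad e] f Ncar_neg[OF f(3)] Fcar_neg[OF f(1)]
    by (intro EcarI[OF lad]) auto
  moreover have "madd (Emod z) e ?e' = mzero (Emod z)"
    using f(2) by (simp add: MM_add[OF lad] MM_zero[OF lad])
  ultimately show ?thesis by blast
qed

lemma E_unit: "e \<in> Ecar z \<Longrightarrow> \<exists>V. finite V \<and> mact (Emod z) e (kq_idem V) = e"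
proof -
  assume e: "e \<in> Ecar z"
  obtain f where f: "f \<in> mcar F_mod" "snd e = coset F_mod (I_sub z) f" "(\<lambda>xi p. fst e xi p - Hmap f xi p) \<in> mcar DSum_KQ"
    using Ecar_rep[OF lad e] by blast
  define d where "d = (\<lambda>xi p. fst e xi p - Hmap f xi p)"
  define V where "V = {u. \<exists>xi n s. f xi n (s,u) \<noteq> 0} \<union> {u. \<exists>xi s. d xi (s,u) \<noteq> 0}"
  have fin: "finite V" unfolding V_def using F_targets_finite[OF f(1)] N_targets_finite[of d] f(3) d_def by auto
  have fkq: "\<And>xi n. kq (f xi n)" using f(1) unfolding Fcar by blast
  have dkq: "\<And>xi. kq (d xi)" using f(3) unfolding Ncar d_def by blast
  have ff: "\<And>xi n. kq_mult (f xi n) (kq_idem V) = f xi n"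
    by (rule idem_right) (use fkq in \<open>auto simp: kq_def V_def\<close>)
  have xe: "\<And>xi p. fst e xi p = Hmap f xi p + d xi p" by (simp add: d_def)
  have xf: "\<And>xi. kq_mult (fst e xi) (kq_idem V) = fst e xi"
  proof (rule idem_right)
    fix xi
    show "\<forall>s u. s < u \<longrightarrow> fst e xi (s,u) = 0"
      using dkq unfolding xe by (auto simp: kq_def Hmap_def kq_mult_def)
    show "\<forall>s u. fst e xi (s,u) \<noteq> 0 \<longrightarrow> u \<in> V"
    proof (intro allI impI)
      fix s u assume ne: "fst e xi (s,u) \<noteq> 0"
      show "u \<in> V"
      proof (cases "d xi (s,u) = 0")
        case False then show ?thesis by (auto simp: V_def)
      next
        case True
        then have "Hmap f xi (s,u) \<noteq> 0" using ne xe by simp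
        then have "(\<Sum>t\<in>{u..s}. f xi 0 (t,u)) \<noteq> 0"
          by (auto simp: Hmap_def Uall_mult split: if_splits)
        then obtain t where "f xi 0 (t,u) \<noteq> 0" by (meson sum.neutral)
        then show ?thesis by (auto simp: V_def)
      qed
    qed
  qed
  have "mact (M_omega1 z) (snd e) (kq_idem V) = snd e"
    using f(2) MM_act[OF lad kq_idem[OF fin], where f=f] ff by simp
  then have "mact (Emod z) e (kq_idem V) = e" using xf by (simp add: prod_eq_iff)
  then show ?thesis using fin by blast
qed

lemma E_is_kqmod: "is_kqmod (Emod z :: (('w \<Rightarrow> 'k::comm_ring_1 kqel) \<times> ('w \<Rightarrow> nat \<Rightarrow> 'k kqel) set, 'k) kqmod)"
  unfolding is_kqmod_def
proof (intro conjI ballI allI impI)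
  show "mzero (Emod z) \<in> mcar (Emod z)" using E_zero by simp
next
  fix x y :: "('w \<Rightarrow> 'k::comm_ring_1 kqel) \<times> ('w \<Rightarrow> nat \<Rightarrow> 'k kqel) set"
  assume "x \<in> mcar (Emod z)" "y \<in> mcar (Emod z)"
  then show "madd (Emod z) x y \<in> mcar (Emod z)" using E_add by simp
next
  fix x y w :: "('w \<Rightarrow> 'k::comm_ring_1 kqel) \<times> ('w \<Rightarrow> nat \<Rightarrow> 'k kqel) set"
  assume a: "x \<in> mcar (Emod z)" "y \<in> mcar (Emod z)" "w \<in> mcar (Emod z)"
  obtain f where f: "snd x = coset F_mod (I_sub z) f" using Ecar_rep[OF lad a(1)[simplified]] by auto
  obtain g where g: "snd y = coset F_mod (I_sub z) g" using Ecar_rep[OF lad a(2)[simplified]] by auto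
  obtain h where h: "snd w = coset F_mod (I_sub z) h" using Ecar_rep[OF lad a(3)[simplified]] by auto
  show "madd (Emod z) (madd (Emod z) x y) w = madd (Emod z) x (madd (Emod z) y w)"
    using f g h by (simp add: MM_add[OF lad] add.assoc)
next
  fix x y :: "('w \<Rightarrow> 'k::comm_ring_1 kqel) \<times> ('w \<Rightarrow> nat \<Rightarrow> 'k kqel) set"
  assume a: "x \<in> mcar (Emod z)" "y \<in> mcar (Emod z)"
  obtain f where f: "snd x = coset F_mod (I_sub z) f" using Ecar_rep[OF lad a(1)[simplified]] by auto
  obtain g where g: "snd y = coset F_mod (I_sub z) g" using Ecar_rep[OF lad a(2)[simplified]] by auto
  show "madd (Emod z) x y = madd (Emod z) y x"
    using f g by (simp add: MM_add[OF lad] add.commute)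
next
  fix x :: "('w \<Rightarrow> 'k::comm_ring_1 kqel) \<times> ('w \<Rightarrow> nat \<Rightarrow> 'k kqel) set" assume a: "x \<in> mcar (Emod z)"
  obtain f where f: "snd x = coset F_mod (I_sub z) f" using Ecar_rep[OF lad a(1)[simplified]] by auto
  show "madd (Emod z) (mzero (Emod z)) x = x"
    using f by (simp add: MM_add[OF lad] MM_zero[OF lad] prod_eq_iff)
next
  fix x :: "('w \<Rightarrow> 'k::comm_ring_1 kqel) \<times> ('w \<Rightarrow> nat \<Rightarrow> 'k kqel) set" assume "x \<in> mcar (Emod z)"
  then show "\<exists>y\<in>mcar (Emod z). madd (Emod z) x y = mzero (Emod z)" using E_neg by simp
next
  fix x :: "('w \<Rightarrow> 'k::comm_ring_1 kqel) \<times> ('w \<Rightarrow> nat \<Rightarrow> 'k kqel) set" and r :: "'k kqel" assume "x \<in> mcar (Emod z)" "kq r"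
  then show "mact (Emod z) x r \<in> mcar (Emod z)" using E_act by simp
next
  fix x y :: "('w \<Rightarrow> 'k::comm_ring_1 kqel) \<times> ('w \<Rightarrow> nat \<Rightarrow> 'k kqel) set" and r :: "'k kqel" assume a: "x \<in> mcar (Emod z)" "y \<in> mcar (Emod z)" and r: "kq r"
  obtain f where f: "snd x = coset F_mod (I_sub z) f" using Ecar_rep[OF lad a(1)[simplified]] by auto
  obtain g where g: "snd y = coset F_mod (I_sub z) g" using Ecar_rep[OF lad a(2)[simplified]] by auto
  show "mact (Emod z) (madd (Emod z) x y) r = madd (Emod z) (mact (Emod z) x r) (mact (Emod z) y r)"
    using f g by (simp add: MM_add[OF lad] MM_act[OF lad r] kq_mult_add_left)
next
  fix x :: "('w \<Rightarrow> 'k::comm_ring_1 kqel) \<times> ('w \<Rightarrow> nat \<Rightarrow> 'k kqel) set" and r s :: "'k kqel" assume a: "x \<in> mcar (Emod z)" and r: "kq r" and s: "kq s"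
  obtain f where f: "snd x = coset F_mod (I_sub z) f" using Ecar_rep[OF lad a(1)[simplified]] by auto
  show "mact (Emod z) x (\<lambda>p. r p + s p) = madd (Emod z) (mact (Emod z) x r) (mact (Emod z) x s)"
    using f by (simp add: MM_add[OF lad] MM_act[OF lad r] MM_act[OF lad s] MM_act[OF lad kq_add[OF r s]] kq_mult_add_right)
next
  fix x :: "('w \<Rightarrow> 'k::comm_ring_1 kqel) \<times> ('w \<Rightarrow> nat \<Rightarrow> 'k kqel) set" and r s :: "'k kqel" assume a: "x \<in> mcar (Emod z)" and r: "kq r" and s: "kq s"
  obtain f where f: "snd x = coset F_mod (I_sub z) f" using Ecar_rep[OF lad a(1)[simplified]] by auto
  show "mact (Emod z) (mact (Emod z) x r) s = mact (Emod z) x (kq_mult r s)"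
    using f by (simp add: MM_act[OF lad r] MM_act[OF lad s] MM_act[OF lad kq_mult_kq[OF r s]] kq_mult_assoc)
next
  fix x :: "('w \<Rightarrow> 'k::comm_ring_1 kqel) \<times> ('w \<Rightarrow> nat \<Rightarrow> 'k kqel) set" assume "x \<in> mcar (Emod z)"
  then show "\<exists>V. finite V \<and> mact (Emod z) x (kq_idem V) = x" using E_unit by simp
qed

end


lemma closure_point:
  fixes S :: "'w::wellorder \<Rightarrow> nat \<Rightarrow> 'w set"
  assumes unc: "uncountable (UNIV :: 'w set)"
    and cnt: "\<forall>x::'w. countable {y. y < x}"
    and fin: "\<And>g n. finite (S g n)"
  shows "\<exists>a. is_lim a \<and> (\<forall>g<a. \<forall>n. a \<notin> S g n)"
proof -
  define T where "T b = (\<Union>g\<in>{g. g < b}. \<Union>n. S g n)" for b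
  have Tc: "countable (T b)" for b
    unfolding T_def using cnt fin by (intro countable_UN) (auto intro: countable_finite)
  have ex: "\<exists>c. b < c \<and> (\<forall>x\<in>T b. x < c)" for b
    using countable_bounded[OF unc cnt, of "insert b (T b)"] Tc[of b] by auto
  define beta where "beta = rec_nat w0 (\<lambda>k b. SOME c. b < c \<and> (\<forall>x\<in>T b. x < c))"
  have bS: "beta (Suc k) = (SOME c. beta k < c \<and> (\<forall>x\<in>T (beta k). x < c))" for k
    by (simp add: beta_def)
  have b1: "beta k < beta (Suc k)" and b2: "\<forall>x\<in>T (beta k). x < beta (Suc k)" for k
    using someI_ex[OF ex[of "beta k"]] unfolding bS[symmetric] by auto
  obtain c where "\<forall>x\<in>range beta. x < c"
    using countable_bounded[OF unc cnt, of "range beta"] by auto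
  then have exa: "\<exists>x. \<forall>k. beta k < x" by auto
  define a where "a = (LEAST x. \<forall>k. beta k < x)"
  have agt: "\<forall>k. beta k < a" unfolding a_def by (rule LeastI_ex[OF exa])
  have ale: "\<And>x. \<forall>k. beta k < x \<Longrightarrow> a \<le> x" unfolding a_def by (rule Least_le)
  have below: "\<exists>k. g < beta k" if "g < a" for g
  proof (rule ccontr)
    assume "\<not> ?thesis"
    then have "\<forall>k. beta k \<le> g" by (auto simp: not_less)
    then have "\<forall>k. beta k < g" using b1 by (meson less_le_trans)
    then have "a \<le> g" by (rule ale)
    then show False using that by simp
  qed
  have lim: "is_lim a"
    unfolding is_lim_def
  proof
    have "w0 \<le> beta 0" unfolding w0_def by (rule Least_le) simp
    then show "a \<noteq> w0" using agt by (metis leD)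
    show "\<not> (\<exists>b. a = w_succ b)"
    proof
      assume "\<exists>b. a = w_succ b"
      then obtain b where ab: "a = w_succ b" by blast
      have "b < w_succ b" by (rule w_succ_gt[OF no_max[OF unc cnt]])
      then obtain k where "b < beta k" using below ab by auto
      then have "w_succ b \<le> beta k" by (rule w_succ_least)
      then show False using agt ab by (metis leD)
    qed
  qed
  have "\<forall>g<a. \<forall>n. a \<notin> S g n"
  proof (intro allI impI notI)
    fix g n assume ga: "g < a" and inS: "a \<in> S g n"
    obtain k where "g < beta k" using below[OF ga] by blast
    then have "a \<in> T (beta k)" unfolding T_def using inS by blast
    then have "a < beta (Suc k)" using b2 by blast
    then show False using agt by (metis leD less_imp_le)
  qed
  then show ?thesis using lim by blast
qed


lemma kq_mult_a: "kq_mult Y (kq_a n) (s,u) = (if u = n \<and> Suc n \<le> s then Y (s, Suc n) else 0)"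
proof -
  have "kq_mult Y (kq_a n) (s,u) = (\<Sum>t\<in>{u..s}. if t = Suc n then (if u = n then Y (s, Suc n) else 0) else 0)"
    unfolding kq_mult_apply by (rule sum.cong) (auto simp: kq_a_def)
  also have "\<dots> = (if u = n \<and> Suc n \<le> s then Y (s, Suc n) else 0)"
    by (auto simp: sum.delta)
  finally show ?thesis .
qed

lemma Hmap_eF_nonlim: "\<not> is_lim g \<Longrightarrow> Hmap (eF g n) = (\<lambda>_ _. 0)"
  by (auto simp: Hmap_def eF_def fun_eq_iff)

lemma Hmap_eF_lim: "is_lim a \<Longrightarrow> Hmap (eF a n) a = kq_mult Uall (kq_e n)"
  by (simp add: Hmap_def eF_def)

lemma Uall_e0: "kq_mult Uall (kq_e 0) (s,0) = 1"
proof -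
  have "kq_mult Uall (kq_e 0) (s,0) = (\<Sum>t\<in>{0..s}. if t = 0 then 1 else 0)"
    unfolding Uall_mult by (rule sum.cong) (auto simp: kq_e_def)
  then show ?thesis by (simp add: sum.delta)
qed

context
  fixes z :: "'w::wellorder \<Rightarrow> nat \<Rightarrow> 'w"
  assumes lad: "is_ladder z"
begin

lemma rel_M:
  assumes a: "is_lim a"
  shows "coset F_mod (I_sub z) (eF (z a n) n) \<in> mcar (M_omega1 z :: (('w \<Rightarrow> nat \<Rightarrow> 'k::comm_ring_1 kqel) set, 'k) kqmod)"
    and "madd (M_omega1 z) (coset F_mod (I_sub z) (eF (z a n) n))
           (mact (M_omega1 z) (coset F_mod (I_sub z) (eF a (Suc n))) (kq_a n))
         = coset F_mod (I_sub z) (eF a n :: 'w \<Rightarrow> nat \<Rightarrow> 'k kqel)"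
proof -
  let ?K = "\<lambda>xi k. kq_mult (eF a (Suc n) xi k :: 'k kqel) (kq_a n)"
  let ?Kn = "\<lambda>xi k. kq_mult (eF a (Suc n) xi k :: 'k kqel) (\<lambda>p. - kq_a n p)"
  have relI: "rel_gen z a n \<in> I_sub z" by (rule rel_in_I[OF a])
  have "madd (M_omega1 z) (coset F_mod (I_sub z) (eF a n))
           (mact (M_omega1 z) (coset F_mod (I_sub z) (eF a (Suc n))) (\<lambda>p. - kq_a n p))
      = coset F_mod (I_sub z) (\<lambda>xi k p. eF a n xi k p + ?Kn xi k p)"
    by (simp add: MM_add[OF lad] MM_act[OF lad kq_neg[OF kq_a]])
  also have "\<dots> = coset F_mod (I_sub z) (\<lambda>xi k p. (\<lambda>xi k p. eF a n xi k p + ?Kn xi k p) xi k p + rel_gen z a n xi k p)"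
    by (rule coset_eq[OF lad relI, symmetric])
  also have "(\<lambda>xi k p. (\<lambda>xi k p. eF a n xi k p + ?Kn xi k p) xi k p + rel_gen z a n xi k p) = eF (z a n) n"
    by (simp add: rel_gen_def kq_mult_neg_right fun_eq_iff)
  finally have eq1: "madd (M_omega1 z) (coset F_mod (I_sub z) (eF a n :: 'w \<Rightarrow> nat \<Rightarrow> 'k kqel))
           (mact (M_omega1 z) (coset F_mod (I_sub z) (eF a (Suc n))) (\<lambda>p. - kq_a n p))
      = coset F_mod (I_sub z) (eF (z a n) n)" .
  have "madd (M_omega1 z) (coset F_mod (I_sub z) (eF a n :: 'w \<Rightarrow> nat \<Rightarrow> 'k kqel))
           (mact (M_omega1 z) (coset F_mod (I_sub z) (eF a (Suc n))) (\<lambda>p. - kq_a n p))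
        \<in> mcar (M_omega1 z)"
    by (intro MM_car_add[OF lad] MM_car_act[OF lad] MM_car_gen[OF lad a] kq_neg kq_a)
  then show "coset F_mod (I_sub z) (eF (z a n) n) \<in> mcar (M_omega1 z :: (('w \<Rightarrow> nat \<Rightarrow> 'k kqel) set, 'k) kqmod)"
    using eq1 by simp
  have "madd (M_omega1 z) (coset F_mod (I_sub z) (eF (z a n) n))
           (mact (M_omega1 z) (coset F_mod (I_sub z) (eF a (Suc n))) (kq_a n))
      = coset F_mod (I_sub z) (\<lambda>xi k p. eF (z a n) n xi k p + ?K xi k p)"
    by (simp add: MM_add[OF lad] MM_act[OF lad kq_a])
  also have "\<dots> = coset F_mod (I_sub z) (\<lambda>xi k p. (\<lambda>xi k p. eF (z a n) n xi k p + ?K xi k p) xi k p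
       + (\<lambda>xi k p. - rel_gen z a n xi k p) xi k p)"
    by (rule coset_eq[OF lad I_neg[OF lad relI], symmetric])
  also have "(\<lambda>xi k p. (\<lambda>xi k p. eF (z a n) n xi k p + ?K xi k p) xi k p
       + (\<lambda>xi k p. - rel_gen z a n xi k p) xi k p) = eF a n"
    by (simp add: rel_gen_def fun_eq_iff)
  finally show "madd (M_omega1 z) (coset F_mod (I_sub z) (eF (z a n) n))
           (mact (M_omega1 z) (coset F_mod (I_sub z) (eF a (Suc n))) (kq_a n))
         = coset F_mod (I_sub z) (eF a n :: 'w \<Rightarrow> nat \<Rightarrow> 'k kqel)" .
qed


lemma no_section:
  fixes s :: "('w \<Rightarrow> nat \<Rightarrow> 'k::comm_ring_1 kqel) set \<Rightarrow> ('w \<Rightarrow> 'k kqel) \<times> ('w \<Rightarrow> nat \<Rightarrow> 'k kqel) set"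
  assumes unc: "uncountable (UNIV :: 'w set)"
    and cnt: "\<forall>x::'w. countable {y. y < x}"
    and hom: "kq_hom (M_omega1 z) (Emod z) s"
    and sec: "\<forall>m\<in>mcar (M_omega1 z). snd (s m) = m"
  shows False
proof -
  have hs: "\<And>x. x \<in> mcar (M_omega1 z) \<Longrightarrow> s x \<in> Ecar z"
    using hom unfolding kq_hom_def by auto
  have hadd: "\<And>x y. x \<in> mcar (M_omega1 z) \<Longrightarrow> y \<in> mcar (M_omega1 z) \<Longrightarrow>
      s (madd (M_omega1 z) x y) = madd (Emod z) (s x) (s y)"
    using hom unfolding kq_hom_def by blast
  have hact: "\<And>x r. x \<in> mcar (M_omega1 z) \<Longrightarrow> kq r \<Longrightarrow>
      s (mact (M_omega1 z) x r) = mact (Emod z) (s x) r"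
    using hom unfolding kq_hom_def by blast
  define m where "m g n = coset F_mod (I_sub z) (eF g n :: 'w \<Rightarrow> nat \<Rightarrow> 'k kqel)" for g n
  define S where "S g n = (if finite {xi. fst (s (m g n)) xi \<noteq> (\<lambda>_. 0)} then {xi. fst (s (m g n)) xi \<noteq> (\<lambda>_. 0)} else {})" for g n
  have Sfin: "\<And>g n. finite (S g n)" by (simp add: S_def)
  obtain a where a: "is_lim a" "\<forall>g<a. \<forall>n. a \<notin> S g n"
    using closure_point[where S=S, OF unc cnt Sfin] by blast
  define y where "y n = fst (s (m a n))" for n
  have mcarA: "\<And>n. m a n \<in> mcar (M_omega1 z)" unfolding m_def by (rule MM_car_gen[OF lad a(1)])
  have gz: "\<And>n. fst (s (m (z a n) n)) a = (\<lambda>_. 0)"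
  proof -
    fix n
    let ?g = "z a n"
    have gl: "?g < a" "\<not> is_lim ?g" using ladder_facts[OF lad a(1)] by auto
    have mg: "m ?g n \<in> mcar (M_omega1 z)" unfolding m_def by (rule rel_M(1)[OF a(1)])
    have sm: "snd (s (m ?g n)) = coset F_mod (I_sub z) (eF ?g n)" using sec mg unfolding m_def by blast
    have "(\<lambda>xi p. fst (s (m ?g n)) xi p - Hmap (eF ?g n) xi p) \<in> mcar DSum_KQ"
      by (rule Ecar_all[OF lad hs[OF mg] sm])
    then have "fst (s (m ?g n)) \<in> mcar DSum_KQ"
      by (simp add: Hmap_eF_nonlim[OF gl(2)])
    then have "finite {xi. fst (s (m ?g n)) xi \<noteq> (\<lambda>_. 0)}" unfolding Ncar by blast
    then have "S ?g n = {xi. fst (s (m ?g n)) xi \<noteq> (\<lambda>_. 0)}" by (simp add: S_def)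
    then show "fst (s (m ?g n)) a = (\<lambda>_. 0)" using a(2) gl(1) by blast
  qed
  have recn: "\<And>n. y n a = kq_mult (y (Suc n) a) (kq_a n)"
  proof -
    fix n
    have mg: "m (z a n) n \<in> mcar (M_omega1 z)" unfolding m_def by (rule rel_M(1)[OF a(1)])
    have ma: "mact (M_omega1 z) (m a (Suc n)) (kq_a n) \<in> mcar (M_omega1 z)"
      by (rule MM_car_act[OF lad mcarA kq_a])
    have "m a n = madd (M_omega1 z) (m (z a n) n) (mact (M_omega1 z) (m a (Suc n)) (kq_a n))"
      unfolding m_def by (rule rel_M(2)[OF a(1), symmetric])
    then have "s (m a n) = madd (Emod z) (s (m (z a n) n)) (mact (Emod z) (s (m a (Suc n))) (kq_a n))"
      using hadd[OF mg ma] hact[OF mcarA kq_a] by simp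
    then have "y n = (\<lambda>xi p. fst (s (m (z a n) n)) xi p + kq_mult (y (Suc n) xi) (kq_a n) p)"
      by (simp add: y_def)
    then show "y n a = kq_mult (y (Suc n) a) (kq_a n)" using gz[of n] by (simp add: fun_eq_iff)
  qed
  have diag: "\<And>s. y s a (s,s) = 0"
    by (subst recn) (simp add: kq_mult_a)
  have ind: "\<And>j s. j \<le> s \<Longrightarrow> y (s - j) a (s, s - j) = 0"
  proof -
    fix j
    show "\<And>s. j \<le> s \<Longrightarrow> y (s - j) a (s, s - j) = 0"
    proof (induction j)
      case 0 then show ?case using diag by simp
    next
      case (Suc j)
      let ?n = "s - Suc j"
      have sn: "Suc ?n = s - j" "Suc ?n \<le> s" using Suc.prems by auto
      have "y ?n a (s, ?n) = y (Suc ?n) a (s, Suc ?n)"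
        using recn[of ?n] sn(2) by (simp add: kq_mult_a)
      also have "\<dots> = 0" unfolding sn(1) using Suc by simp
      finally show ?case .
    qed
  qed
  have y0: "\<And>s. y 0 a (s,0) = 0" using ind[of s s for s] by simp
  have sm0: "snd (s (m a 0)) = coset F_mod (I_sub z) (eF a 0)" using sec mcarA unfolding m_def by blast
  have "(\<lambda>xi p. fst (s (m a 0)) xi p - Hmap (eF a 0) xi p) \<in> mcar DSum_KQ"
    by (rule Ecar_all[OF lad hs[OF mcarA] sm0])
  then have "kq (\<lambda>p. y 0 a p - Hmap (eF a 0) a p)" unfolding Ncar y_def by blast
  then have fin: "finite {p. y 0 a p - Hmap (eF a 0) a p \<noteq> 0}" unfolding kq_def by blast
  have "range (\<lambda>s::nat. (s, 0::nat)) \<subseteq> {p. y 0 a p - Hmap (eF a 0) a p \<noteq> 0}"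
    using y0 by (auto simp: Hmap_eF_lim[OF a(1)] Uall_e0)
  then have "finite (range (\<lambda>s::nat. (s, 0::nat)))" using fin by (rule finite_subset)
  moreover have "inj (\<lambda>s::nat. (s, 0::nat))" by (auto intro: injI)
  ultimately have "finite (UNIV :: nat set)" using finite_imageD by blast
  then show False by simp
qed
end

theorem claim2p3:
  fixes z :: "'w::wellorder \<Rightarrow> nat \<Rightarrow> 'w"
  assumes "uncountable (UNIV :: 'w set)"
    and "\<forall>x::'w. countable {y. y < x}"
    and "\<forall>p :: 'k::field poly. degree p > 0 \<longrightarrow> (\<exists>x. poly p x = 0)"
    and "is_ladder z"
  shows "Ext1_nonzero (M_omega1 z :: (('w \<Rightarrow> nat \<Rightarrow> 'k kqel) set, 'k) kqmod)
                      (DSum_KQ :: ('w \<Rightarrow> 'k kqel, 'k) kqmod)"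
proof -
  note lad = assms(4)
  define i where "i = (\<lambda>n::'w \<Rightarrow> 'k kqel. (n, mzero (M_omega1 z :: (('w \<Rightarrow> nat \<Rightarrow> 'k kqel) set, 'k) kqmod)))"
  have iin: "i n \<in> Ecar z" if n: "n \<in> mcar DSum_KQ" for n
    unfolding i_def MM_zero[OF lad]
    by (rule EcarI[OF lad]) (use n in \<open>auto simp: MM_car_zero[OF lad, unfolded MM_zero[OF lad]] Fcar_zero Hmap_zero\<close>)
  have E: "is_kqmod (Emod z :: (('w \<Rightarrow> 'k kqel) \<times> ('w \<Rightarrow> nat \<Rightarrow> 'k kqel) set, 'k) kqmod)"
    by (rule E_is_kqmod[OF lad])
  have ihom: "kq_hom DSum_KQ (Emod z) i"
    unfolding kq_hom_def
  proof (intro conjI ballI allI impI)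
    show "i ` mcar DSum_KQ \<subseteq> mcar (Emod z)" using iin by auto
  next
    fix x y :: "'w \<Rightarrow> 'k kqel"
    show "i (madd DSum_KQ x y) = madd (Emod z) (i x) (i y)"
      by (simp add: i_def MM_zero[OF lad] MM_add[OF lad])
  next
    fix x :: "'w \<Rightarrow> 'k kqel" and r :: "'k kqel" assume r: "kq r"
    show "i (mact DSum_KQ x r) = mact (Emod z) (i x) r"
      by (simp add: i_def MM_zero[OF lad] MM_act[OF lad r])
  qed
  have iinj: "inj_on i (mcar DSum_KQ)" by (auto simp: i_def inj_on_def)
  have phom: "kq_hom (Emod z) (M_omega1 z) snd"
    unfolding kq_hom_def using Ecar_snd[OF lad] by auto
  have psurj: "snd ` mcar (Emod z) = mcar (M_omega1 z :: (('w \<Rightarrow> nat \<Rightarrow> 'k kqel) set, 'k) kqmod)"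
  proof
    show "snd ` mcar (Emod z) \<subseteq> mcar (M_omega1 z :: (('w \<Rightarrow> nat \<Rightarrow> 'k kqel) set, 'k) kqmod)"
      using Ecar_snd[OF lad] by auto
  next
    show "mcar (M_omega1 z :: (('w \<Rightarrow> nat \<Rightarrow> 'k kqel) set, 'k) kqmod) \<subseteq> snd ` mcar (Emod z)"
    proof
      fix m :: "('w \<Rightarrow> nat \<Rightarrow> 'k kqel) set" assume m: "m \<in> mcar (M_omega1 z)"
      then obtain f where f: "f \<in> mcar F_mod" "m = coset F_mod (I_sub z) f" using MM_rep[OF lad] by blast
      have "(Hmap f, m) \<in> Ecar z"
        unfolding f(2) by (rule EcarI[OF lad]) (use m f in \<open>auto simp: Ncar_zero\<close>)
      then show "m \<in> snd ` mcar (Emod z)" by force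
    qed
  qed
  have ker: "i ` mcar DSum_KQ = {x \<in> mcar (Emod z). snd x = mzero (M_omega1 z)}"
  proof
    show "i ` mcar DSum_KQ \<subseteq> {x \<in> mcar (Emod z). snd x = mzero (M_omega1 z)}"
      using iin by (auto simp: i_def)
  next
    show "{x \<in> mcar (Emod z). snd x = mzero (M_omega1 z)} \<subseteq> i ` mcar DSum_KQ"
    proof
      fix e :: "('w \<Rightarrow> 'k kqel) \<times> ('w \<Rightarrow> nat \<Rightarrow> 'k kqel) set"
      assume "e \<in> {x \<in> mcar (Emod z). snd x = mzero (M_omega1 z)}"
      then have e: "e \<in> Ecar z" "snd e = coset F_mod (I_sub z) (\<lambda>_ _ _. 0)"
        by (auto simp: MM_zero[OF lad])
      have "(\<lambda>xi p. fst e xi p - Hmap (\<lambda>_ _ _. 0) xi p) \<in> mcar DSum_KQ"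
        by (rule Ecar_all[OF lad e])
      then have "fst e \<in> mcar DSum_KQ" by (simp add: Hmap_zero)
      moreover have "e = i (fst e)" using e(2) by (simp add: i_def MM_zero[OF lad] prod_eq_iff)
      ultimately show "e \<in> i ` mcar DSum_KQ" by blast
    qed
  qed
  have nosec: "\<not> (\<exists>s. kq_hom (M_omega1 z) (Emod z) s \<and> (\<forall>m\<in>mcar (M_omega1 z). snd (s m) = m))"
    using no_section[OF lad assms(1) assms(2)] by blast
  show ?thesis
    unfolding Ext1_nonzero_def
    using E ihom iinj phom psurj ker nosec by blast
qed

end
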